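(* Let $p$ be a prime, $e\ge1$, $G$ a finite abelian group of order $p^e$, and $q\neq p$ a prime. Let $\psi^q\colon\mathbf{Z}[G]\to\mathbf{Z}[G]$ be the ring homomorphism with $\psi^q(g)=g^q$, and $f_q(t)=\frac{1-t^q}{1-t}$. If $\rho$ is a representation of level $k>0$, then $\psi^q(b_\rho)=f_q(y_\rho)\,b_\rho$; moreover $\psi^q(b_1)=b_1$.
   Context: A representation is a group homomorphism $\rho\colon G\to\mathbf{C}^*$; its level is $k$ if $\rho(G)$ has $p^k$ elements. Write $\omega=\exp(2\pi i/p)$. For $\rho$ of level $k>0$, $b_\rho=\sum_{x\in G,\ \rho(x)=1}x-\sum_{\xi\in G,\ \rho(\xi)=\omega}\xi$ and $y_\rho\in G$ is a fixed element with $\rho(y_\rho)=\omega$; $b_1=\sum_{x\in G}x$. *)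

theory Defs
  imports Complex_Main "HOL-Algebra.Group" "HOL-Computational_Algebra.Primes"
begin

text \<open>The integral group ring Z[G] of a finite group G is modelled as functions
  carrier G \<Rightarrow> int (coefficient of each group element), equal to 0 outside carrier G.\<close>

definition gr_delta :: "('a, 'b) monoid_scheme \<Rightarrow> 'a \<Rightarrow> 'a \<Rightarrow> int" where
  "gr_delta G g = (\<lambda>z. if z \<in> carrier G \<and> z = g then 1 else 0)"

definition gr_mult :: "('a, 'b) monoid_scheme \<Rightarrow> ('a \<Rightarrow> int) \<Rightarrow> ('a \<Rightarrow> int) \<Rightarrow> 'a \<Rightarrow> int" where
  "gr_mult G a b = (\<lambda>z. if z \<in> carrier G
      then (\<Sum>x\<in>carrier G. a x * b (inv\<^bsub>G\<^esub> x \<otimes>\<^bsub>G\<^esub> z)) else 0)"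

definition psi :: "('a, 'b) monoid_scheme \<Rightarrow> nat \<Rightarrow> ('a \<Rightarrow> int) \<Rightarrow> 'a \<Rightarrow> int" where
  "psi G q a = (\<lambda>z. if z \<in> carrier G
      then (\<Sum>x\<in>{x\<in>carrier G. x [^]\<^bsub>G\<^esub> q = z}. a x) else 0)"

text \<open>f_q(y) = (1 - y^q)/(1 - y) = 1 + y + ... + y^(q-1) in Z[G].\<close>
definition f_q :: "('a, 'b) monoid_scheme \<Rightarrow> nat \<Rightarrow> 'a \<Rightarrow> 'a \<Rightarrow> int" where
  "f_q G q y = (\<lambda>z. \<Sum>i<q. gr_delta G (y [^]\<^bsub>G\<^esub> i) z)"

definition representation :: "('a, 'b) monoid_scheme \<Rightarrow> ('a \<Rightarrow> complex) \<Rightarrow> bool" where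
  "representation G \<rho> \<longleftrightarrow> (\<forall>x\<in>carrier G. \<rho> x \<noteq> 0) \<and>
     (\<forall>x\<in>carrier G. \<forall>y\<in>carrier G. \<rho> (x \<otimes>\<^bsub>G\<^esub> y) = \<rho> x * \<rho> y)"

definition rep_level :: "('a, 'b) monoid_scheme \<Rightarrow> nat \<Rightarrow> ('a \<Rightarrow> complex) \<Rightarrow> nat \<Rightarrow> bool" where
  "rep_level G p \<rho> k \<longleftrightarrow> card (\<rho> ` carrier G) = p ^ k"

definition omega :: "nat \<Rightarrow> complex" where
  "omega p = exp (2 * pi * \<i> / of_nat p)"

definition b_rho :: "('a, 'b) monoid_scheme \<Rightarrow> nat \<Rightarrow> ('a \<Rightarrow> complex) \<Rightarrow> 'a \<Rightarrow> int" where
  "b_rho G p \<rho> = (\<lambda>z. (if z \<in> carrier G \<and> \<rho> z = 1 then 1 else 0)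
                     - (if z \<in> carrier G \<and> \<rho> z = omega p then 1 else 0))"

definition b_one :: "('a, 'b) monoid_scheme \<Rightarrow> 'a \<Rightarrow> int" where
  "b_one G = (\<lambda>z. if z \<in> carrier G then 1 else 0)"

end

theory Submission
  imports Defs "HOL-Algebra.FiniteProduct" "HOL-Number_Theory.Cong"
begin

lemma grp_pow_cong:
  fixes G :: "('a, 'b) monoid_scheme" (structure)
  assumes "group G" "x \<in> carrier G" "x [^]\<^bsub>G\<^esub> (N::nat) = \<one>\<^bsub>G\<^esub>" "[a = b] (mod N)"
  shows "x [^]\<^bsub>G\<^esub> a = x [^]\<^bsub>G\<^esub> b"
proof -
  interpret group G by fact
  have r: "x [^] c = x [^] (c mod N)" for c
  proof -
    have "x [^] c = x [^] (N * (c div N) + c mod N)" by simp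
    also have "\<dots> = (x [^] N) [^] (c div N) \<otimes> x [^] (c mod N)"
      using assms(2) by (simp add: nat_pow_mult nat_pow_pow)
    also have "\<dots> = x [^] (c mod N)" using assms(2,3) by simp
    finally show ?thesis .
  qed
  show ?thesis using r[of a] r[of b] assms(4) unfolding cong_def by simp
qed

lemma cpx_pow_cong:
  fixes c :: complex
  assumes "c ^ N = 1" "[a = b] (mod N)"
  shows "c ^ a = c ^ b"
proof -
  have r: "c ^ k = c ^ (k mod N)" for k
  proof -
    have "c ^ k = c ^ (N * (k div N) + k mod N)" by simp
    also have "\<dots> = (c ^ N) ^ (k div N) * c ^ (k mod N)"
      by (simp only: power_add power_mult)
    also have "\<dots> = c ^ (k mod N)" using assms(1) by simp
    finally show ?thesis .
  qed
  show ?thesis using r[of a] r[of b] assms(2) unfolding cong_def by simp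
qed

lemma rep_one:
  fixes G :: "('a, 'b) monoid_scheme" (structure)
  assumes "group G" "representation G \<rho>"
  shows "\<rho> \<one>\<^bsub>G\<^esub> = 1"
proof -
  interpret group G by fact
  have "\<rho> \<one> = \<rho> \<one> * \<rho> \<one>" using assms(2) unfolding representation_def
    by (metis one_closed l_one)
  moreover have "\<rho> \<one> \<noteq> 0" using assms(2) unfolding representation_def by simp
  ultimately show ?thesis by (metis mult_cancel_left1)
qed

lemma rep_pow:
  fixes G :: "('a, 'b) monoid_scheme" (structure)
  assumes "group G" "representation G \<rho>" "x \<in> carrier G"
  shows "\<rho> (x [^]\<^bsub>G\<^esub> (n::nat)) = \<rho> x ^ n"
proof (induction n)
  case 0 then show ?case using rep_one[OF assms(1,2)] by simp
next
  case (Suc n)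
  interpret group G by fact
  have "\<rho> (x [^] Suc n) = \<rho> (x [^] n \<otimes> x)" by simp
  also have "\<dots> = \<rho> (x [^] n) * \<rho> x" using assms(2,3) unfolding representation_def by simp
  finally show ?case using Suc by simp
qed

lemma rep_inv:
  fixes G :: "('a, 'b) monoid_scheme" (structure)
  assumes "group G" "representation G \<rho>" "x \<in> carrier G"
  shows "\<rho> (inv\<^bsub>G\<^esub> x) * \<rho> x = 1"
proof -
  interpret group G by fact
  have h: "\<rho> (inv x \<otimes> x) = \<rho> (inv x) * \<rho> x"
    using assms(2,3) inv_closed[OF assms(3)] unfolding representation_def by blast
  then show ?thesis using rep_one[OF assms(1,2)] l_inv[OF assms(3)] by simp
qed

lemma omega_pow: "p > 0 \<Longrightarrow> omega p ^ p = 1"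
proof -
  assume "p > 0"
  have "omega p ^ p = exp (of_nat p * (2 * pi * \<i> / of_nat p))"
    unfolding omega_def by (rule exp_of_nat_mult[symmetric])
  also have "\<dots> = exp (2 * of_real pi * \<i>)" using \<open>p > 0\<close> by simp
  finally show ?thesis by simp
qed

lemma main_aux:
  fixes G :: "('a, 'b) monoid_scheme" (structure) and p e q :: nat
  assumes "comm_group G" and "finite (carrier G)"
    and "prime p" and "e \<ge> 1" and "card (carrier G) = p ^ e"
    and "prime q" and "q \<noteq> p"
  shows "(\<forall>\<rho> k y. representation G \<rho> \<and> rep_level G p \<rho> k \<and> k > 0
            \<and> y \<in> carrier G \<and> \<rho> y = omega p
          \<longrightarrow> psi G q (b_rho G p \<rho>) = gr_mult G (f_q G q y) (b_rho G p \<rho>))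
         \<and> psi G q (b_one G) = b_one G"
proof -
  interpret comm_group G by fact
  have grp: "group G" by unfold_locales
  define N where "N = p ^ e"
  have "coprime q p" using assms(3,6,7) by (simp add: primes_coprime)
  then have "coprime q N" unfolding N_def by simp
  then obtain m where m: "[q * m = 1] (mod N)" using cong_solve_nat[of q N] by auto
  have Npow: "x [^] N = \<one>" if "x \<in> carrier G" for x
    using power_order_eq_one[OF assms(2) that] assms(5) N_def by simp
  have root: "{x\<in>carrier G. x [^] q = z} = {z [^] m}" if z: "z \<in> carrier G" for z
  proof -
    have "(z [^] m) [^] q = z [^] (q * m)" using z by (simp add: nat_pow_pow mult.commute)
    also have "\<dots> = z [^] (1::nat)" using grp_pow_cong[OF grp z Npow[OF z] m] .
    finally have 1: "(z [^] m) [^] q = z" using z by simp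
    have 2: "x = z [^] m" if "x \<in> carrier G" "x [^] q = z" for x
    proof -
      have "z [^] m = x [^] (q * m)" using that nat_pow_pow[of x q m] by simp
      also have "\<dots> = x [^] (1::nat)" using grp_pow_cong[OF grp that(1) Npow[OF that(1)] m] .
      finally show ?thesis using that by simp
    qed
    show ?thesis using 1 2 z by auto
  qed
  have psi_eq: "psi G q a z = (if z \<in> carrier G then a (z [^] m) else 0)" for a z
    unfolding psi_def using root by simp
  have part2: "psi G q (b_one G) = b_one G"
    by (rule ext) (simp add: psi_eq b_one_def)
  have part1: "psi G q (b_rho G p \<rho>) = gr_mult G (f_q G q y) (b_rho G p \<rho>)"
    if rep: "representation G \<rho>" and y: "y \<in> carrier G" and ry: "\<rho> y = omega p" for \<rho> y
  proof (rule ext)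
    fix z
    show "psi G q (b_rho G p \<rho>) z = gr_mult G (f_q G q y) (b_rho G p \<rho>) z"
    proof (cases "z \<in> carrier G")
      case False then show ?thesis by (simp add: psi_eq gr_mult_def)
    next
      case z: True
      define c where "c = \<rho> z"
      define w where "w = omega p"
      have p0: "p > 0" using assms(3) prime_gt_0_nat by blast
      have wN: "w ^ N = 1" unfolding w_def N_def using omega_pow[OF p0] assms(4)
        by (metis One_nat_def Suc_le_D power_Suc power_mult power_one)
      have cN: "c ^ N = 1" unfolding c_def using rep_pow[OF grp rep z, of N] Npow[OF z] rep_one[OF grp rep]
        by simp
      have w0: "w \<noteq> 0" unfolding w_def omega_def by simp
      have c0: "c \<noteq> 0" using rep z unfolding representation_def c_def by simp
      have e1: "(c ^ m = 1) \<longleftrightarrow> c = 1"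
      proof
        assume "c ^ m = 1"
        then have "c ^ (q*m) = 1" by (simp add: power_mult mult.commute)
        then show "c = 1" using cpx_pow_cong[OF cN m] by simp
      qed simp
      have e2: "(c ^ m = w) \<longleftrightarrow> c = w ^ q"
      proof
        assume "c ^ m = w"
        then have "c ^ (q*m) = w ^ q" by (simp add: power_mult mult.commute)
        then show "c = w ^ q" using cpx_pow_cong[OF cN m] by simp
      next
        assume "c = w ^ q"
        then have "c ^ m = w ^ (q * m)" by (simp add: power_mult)
        then show "c ^ m = w" using cpx_pow_cong[OF wN m] by simp
      qed
      have lhs: "psi G q (b_rho G p \<rho>) z = (if c = 1 then 1 else 0) - (if c = w ^ q then 1 else 0)"
        using z e1 e2 rep_pow[OF grp rep z, of m]
        by (simp add: psi_eq b_rho_def c_def w_def)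
      have swap: "gr_mult G (f_q G q y) (b_rho G p \<rho>) z
          = (\<Sum>i<q. b_rho G p \<rho> (inv (y [^] i) \<otimes> z))"
      proof -
        have "gr_mult G (f_q G q y) (b_rho G p \<rho>) z
            = (\<Sum>x\<in>carrier G. \<Sum>i<q. gr_delta G (y [^] i) x * b_rho G p \<rho> (inv x \<otimes> z))"
          using z by (simp add: gr_mult_def f_q_def sum_distrib_right)
        also have "\<dots> = (\<Sum>i<q. \<Sum>x\<in>carrier G. gr_delta G (y [^] i) x * b_rho G p \<rho> (inv x \<otimes> z))"
          by (rule sum.swap)
        also have "\<dots> = (\<Sum>i<q. b_rho G p \<rho> (inv (y [^] i) \<otimes> z))"
        proof (rule sum.cong[OF refl])
          fix i :: nat
          have yi: "y [^] i \<in> carrier G" using y by simp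
          have "(\<Sum>x\<in>carrier G. gr_delta G (y [^] i) x * b_rho G p \<rho> (inv x \<otimes> z))
              = (\<Sum>x\<in>carrier G. if x = y [^] i then b_rho G p \<rho> (inv x \<otimes> z) else 0)"
            by (rule sum.cong) (auto simp: gr_delta_def)
          also have "\<dots> = b_rho G p \<rho> (inv (y [^] i) \<otimes> z)"
            using yi assms(2) by (simp add: sum.delta')
          finally show "(\<Sum>x\<in>carrier G. gr_delta G (y [^] i) x * b_rho G p \<rho> (inv x \<otimes> z))
              = b_rho G p \<rho> (inv (y [^] i) \<otimes> z)" .
        qed
        finally show ?thesis .
      qed
      have term_eq: "b_rho G p \<rho> (inv (y [^] i) \<otimes> z)
          = (if c = w ^ i then 1 else 0) - (if c = w ^ Suc i then 1 else 0)" for i :: nat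
      proof -
        have yi: "y [^] i \<in> carrier G" using y by simp
        have rv: "\<rho> (inv (y [^] i) \<otimes> z) = c / w ^ i"
        proof -
          have "\<rho> (inv (y [^] i) \<otimes> z) = \<rho> (inv (y [^] i)) * c"
            using rep yi z unfolding representation_def c_def by simp
          moreover have "\<rho> (inv (y [^] i)) * w ^ i = 1"
            using rep_inv[OF grp rep yi] rep_pow[OF grp rep y, of i] ry w_def by simp
          ultimately show ?thesis using w0 by (simp add: field_simps)
        qed
        have "c / w ^ i = 1 \<longleftrightarrow> c = w ^ i" using w0 by (auto simp: field_simps)
        moreover have "c / w ^ i = w \<longleftrightarrow> c = w ^ Suc i" using w0 by (auto simp: field_simps)
        ultimately show ?thesis using yi z rv by (simp add: b_rho_def w_def)
      qed
      have "gr_mult G (f_q G q y) (b_rho G p \<rho>) z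
          = (\<Sum>i<q. (if c = w ^ i then 1 else 0) - (if c = w ^ Suc i then 1 else (0::int)))"
        using swap term_eq by simp
      also have "\<dots> = (if c = w ^ 0 then 1 else 0) - (if c = w ^ q then 1 else 0)"
        using sum_lessThan_telescope'[of "\<lambda>i. if c = w ^ i then 1 else (0::int)" q] by simp
      finally show ?thesis using lhs by simp
    qed
  qed
  show ?thesis using part1 part2 by blast
qed

theorem mainTheorem7:
  fixes G :: "('a, 'b) monoid_scheme" and p e q :: nat
  assumes "comm_group G" and "finite (carrier G)"
    and "prime p" and "e \<ge> 1" and "card (carrier G) = p ^ e"
    and "prime q" and "q \<noteq> p"
  shows "(\<forall>\<rho> k y. representation G \<rho> \<and> rep_level G p \<rho> k \<and> k > 0
            \<and> y \<in> carrier G \<and> \<rho> y = omega p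
          \<longrightarrow> psi G q (b_rho G p \<rho>) = gr_mult G (f_q G q y) (b_rho G p \<rho>))
         \<and> psi G q (b_one G) = b_one G"
  using main_aux[OF assms] .

end
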